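(* Let $1\le k\le d$ and $\alpha\ge1$. Let $P_1,\dots,P_m\subset\mathbb{R}^d$ be an arbitrary collection of finite point sets, and for each $i$ let $c(P_i)\subseteq P_i$ be an $\alpha$-approximate core-set for the $k$-directional height of $P_i$. Then $$\mathrm{MAXDET}_k\Big(\bigcup_{i=1}^m P_i\Big)\le \alpha^{2k}\cdot\mathrm{MAXDET}_k\Big(\bigcup_{i=1}^m c(P_i)\Big).$$
   Context: For a finite set $S\subset\mathbb{R}^d$ with $|S|=k$, let $M_S$ be the $k\times d$ matrix whose rows are the points of $S$. For finite $P\subset\mathbb{R}^d$, $\mathrm{MAXDET}_k(P)=\max_{S\subseteq P,\,|S|=k}\det(M_SM_S^\top)$. Let $\mathcal{H}_{k-1}$ be the set of all $(k-1)$-dimensional linear subspaces of $\mathbb{R}^d$, and $\mathrm{dist}(p,\mathcal{H})$ the Euclidean distance from point $p$ to subspace $\mathcal{H}$. The $k$-directional height of a point set $P$ with respect to $\mathcal{H}\in\mathcal{H}_{k-1}$ is $h(P,\mathcal{H})=\max_{p\in P}\mathrm{dist}(p,\mathcal{H})$. A subset $C\subseteq P$ is an $\alpha$-approximate core-set for the $k$-directional height of $P$ if $h(C,\mathcal{H})\ge h(P,\mathcal{H})/\alpha$ for every $\mathcal{H}\in\mathcal{H}_{k-1}$. *)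

theory Defs
  imports "HOL-Analysis.Analysis" "Jordan_Normal_Form.Determinant"
begin

text \<open>Points of R^d are elements of a Euclidean space 'a with DIM('a) = d.
  For a list xs of k points (the rows of M_S), M_S M_S^T is the k x k Gram matrix
  with entries xs!i \<bullet> xs!j.\<close>

definition gram_mat :: "'a::euclidean_space list \<Rightarrow> real mat" where
  "gram_mat xs = mat (length xs) (length xs) (\<lambda>(i,j). (xs ! i) \<bullet> (xs ! j))"

text \<open>MAXDET_k(P): maximum over k-element subsets S of P (listed in some order, which
  does not affect the determinant) of det(M_S M_S^T); 0 by convention if P has fewer
  than k points.\<close>

definition maxdet :: "nat \<Rightarrow> 'a::euclidean_space set \<Rightarrow> real" where
  "maxdet k P =
     (let D = {det (gram_mat xs) | xs. distinct xs \<and> set xs \<subseteq> P \<and> length xs = k}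
      in if D = {} then 0 else Max D)"

definition subspaces_of_dim :: "nat \<Rightarrow> 'a::euclidean_space set set" where
  "subspaces_of_dim n = {H. subspace H \<and> dim H = n}"

definition height :: "'a::euclidean_space set \<Rightarrow> 'a set \<Rightarrow> real" where
  "height P H = (if P = {} then 0 else Max ((\<lambda>p. infdist p H) ` P))"

definition approx_coreset ::
  "real \<Rightarrow> nat \<Rightarrow> 'a::euclidean_space set \<Rightarrow> 'a set \<Rightarrow> bool" where
  "approx_coreset \<alpha> k C P \<longleftrightarrow>
     C \<subseteq> P \<and> (\<forall>H \<in> subspaces_of_dim (k - 1). height C H \<ge> height P H / \<alpha>)"

end

theory Submission
  imports Defs
begin

lemma gram_carrier: "gram_mat xs \<in> carrier_mat (length xs) (length xs)"
  unfolding gram_mat_def by auto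

lemma gram_dim[simp]: "dim_row (gram_mat xs) = length xs" "dim_col (gram_mat xs) = length xs"
  unfolding gram_mat_def by auto

lemma gram_index: "i < length xs \<Longrightarrow> j < length xs \<Longrightarrow> gram_mat xs $$ (i,j) = (xs!i) \<bullet> (xs!j)"
  unfolding gram_mat_def by auto

lemma gram_shift:
  assumes j: "j < length xs" and l: "l < length xs" and lj: "l \<noteq> j"
  shows "det (gram_mat (xs[j := q + c *\<^sub>R xs!l])) = det (gram_mat (xs[j := q]))"
proof -
  let ?G = "gram_mat (xs[j := q])"
  have "gram_mat (xs[j := q + c *\<^sub>R xs!l]) = addcol c j l (addrow c j l ?G)"
    by (rule eq_matI) (use j l lj in \<open>auto simp: gram_index mat_addrow_def nth_list_update
         inner_add_left inner_add_right algebra_simps gram_mat_def\<close>)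
  also have "det \<dots> = det ?G"
  proof -
    have C: "?G \<in> carrier_mat (length xs) (length xs)" using gram_carrier[of "xs[j:=q]"] by simp
    have C2: "addrow c j l ?G \<in> carrier_mat (length xs) (length xs)" using C by (simp add: mat_addrow_def)
    show ?thesis using det_addcol[OF l _ C2, of j c] det_addrow[OF l _ C, of j c] lj by simp
  qed
  finally show ?thesis .
qed

definition others :: "'a list \<Rightarrow> nat \<Rightarrow> 'a list" where
  "others xs j = take j xs @ drop (Suc j) xs"

lemma others_length: "j < length xs \<Longrightarrow> length (others xs j) = length xs - 1"
  unfolding others_def by auto

lemma others_nth: "j < length xs \<Longrightarrow> i < length xs - 1 \<Longrightarrow>
   others xs j ! i = xs ! (if i < j then i else Suc i)"
  unfolding others_def by (auto simp: nth_append min_def)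

lemma others_set: "x \<in> set (others xs j) \<Longrightarrow> j < length xs \<Longrightarrow> \<exists>l<length xs. l \<noteq> j \<and> xs ! l = x"
proof -
  assume x: "x \<in> set (others xs j)" and j: "j < length xs"
  then obtain i where i: "i < length xs - 1" "others xs j ! i = x"
    by (metis in_set_conv_nth others_length)
  show ?thesis
    using i j others_nth[OF j i(1)] by (intro exI[of _ "if i < j then i else Suc i"]) auto
qed

lemma others_set2: "l < length xs \<Longrightarrow> l \<noteq> j \<Longrightarrow> j < length xs \<Longrightarrow> xs ! l \<in> set (others xs j)"
proof -
  assume l: "l < length xs" "l \<noteq> j" and j: "j < length xs"
  define i where "i = (if l < j then l else l - 1)"
  have i: "i < length xs - 1" using l j unfolding i_def by auto
  have "others xs j ! i = xs ! l" using others_nth[OF j i] l unfolding i_def by auto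
  then show ?thesis using i others_length[OF j] by (metis nth_mem)
qed

lemma gram_span_shift:
  assumes j: "j < length xs" and h: "h \<in> span (set (others xs j))"
  shows "det (gram_mat (xs[j := q + h])) = det (gram_mat (xs[j := q]))"
  using h
proof (induction arbitrary: q rule: span_induct_alt)
  case base
  then show ?case by simp
next
  case (step c x y)
  obtain l where l: "l < length xs" "l \<noteq> j" "xs ! l = x" using others_set[OF step(1) j] by blast
  have "det (gram_mat (xs[j := q + (c *\<^sub>R x + y)])) = det (gram_mat (xs[j := (q + y) + c *\<^sub>R xs ! l]))"
    using l by (simp add: algebra_simps)
  also have "\<dots> = det (gram_mat (xs[j := q + y]))" by (rule gram_shift[OF j l(1,2)])
  also have "\<dots> = det (gram_mat (xs[j := q]))" by (rule step.IH)
  finally show ?case .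
qed

lemma gram_orth:
  fixes xs :: "'a::euclidean_space list" and r :: 'a
  assumes j: "j < length xs" and r: "\<And>x. x \<in> set (others xs j) \<Longrightarrow> r \<bullet> x = 0"
  shows "det (gram_mat (xs[j := r])) = (r \<bullet> r) * det (gram_mat (others xs j))"
proof -
  let ?A = "gram_mat (xs[j := r])"
  have A: "?A \<in> carrier_mat (length xs) (length xs)" using gram_carrier[of "xs[j:=r]"] by simp
  have "det ?A = (\<Sum>i<length xs. ?A $$ (i,j) * cofactor ?A i j)"
    by (rule laplace_expansion_column[OF A j])
  also have "\<dots> = ?A $$ (j,j) * cofactor ?A j j"
  proof -
    have z: "\<forall>i\<in>{..<length xs} - {j}. ?A $$ (i, j) * cofactor ?A i j = 0"
    proof
      fix i assume i: "i \<in> {..<length xs} - {j}"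
      have "xs ! i \<in> set (others xs j)" using i j by (intro others_set2) auto
      then have "r \<bullet> xs ! i = 0" using r by auto
      then have "?A $$ (i,j) = 0" using i j by (simp add: gram_index inner_commute)
      then show "?A $$ (i, j) * cofactor ?A i j = 0" by simp
    qed
    have "(\<Sum>i<length xs. ?A $$ (i,j) * cofactor ?A i j) = ?A $$ (j,j) * cofactor ?A j j
       + (\<Sum>i\<in>{..<length xs} - {j}. ?A $$ (i,j) * cofactor ?A i j)"
      by (rule sum.remove) (use j in auto)
    also have "(\<Sum>i\<in>{..<length xs} - {j}. ?A $$ (i,j) * cofactor ?A i j) = 0"
      by (rule sum.neutral[OF z])
    finally show ?thesis by simp
  qed
  also have "mat_delete ?A j j = gram_mat (others xs j)"
    by (rule eq_matI) (use j in \<open>auto simp: mat_delete_def others_length others_nth gram_index nth_list_update\<close>)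
  then have "cofactor ?A j j = det (gram_mat (others xs j))"
    unfolding cofactor_def by (simp add: power_add[symmetric] mult_2[symmetric])
  finally show ?thesis using j by (simp add: gram_index)
qed

lemma infdist_orth:
  fixes q h r :: "'a::euclidean_space"
  assumes h: "h \<in> span S" and r: "\<And>w. w \<in> span S \<Longrightarrow> r \<bullet> w = 0" and q: "q = h + r"
  shows "infdist q (span S) = norm r"
proof (rule antisym)
  show "infdist q (span S) \<le> norm r"
    using infdist_le[OF h, of q] q by (simp add: dist_norm)
next
  have ne: "span S \<noteq> {}" using span_zero by blast
  show "norm r \<le> infdist q (span S)"
    unfolding infdist_notempty[OF ne]
  proof (rule cINF_greatest[OF ne])
    fix a assume a: "a \<in> span S"
    have ha: "h - a \<in> span S" using h a by (simp add: span_diff)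
    have o: "r \<bullet> (h - a) = 0" using r[OF ha] by simp
    have "(norm (q - a))^2 = (norm r)^2 + (norm (h - a))^2"
      unfolding q power2_norm_eq_inner using o
      by (simp add: algebra_simps inner_commute)
    then have "(norm r)^2 \<le> (norm (q - a))^2" by simp
    then show "norm r \<le> dist q a" by (simp add: dist_norm power2_le_iff_abs_le)
  qed
qed

lemma gram_formula:
  fixes xs :: "'a::euclidean_space list"
  assumes j: "j < length xs"
  shows "det (gram_mat (xs[j := q])) = (infdist q (span (set (others xs j))))^2 * det (gram_mat (others xs j))"
proof -
  obtain h r where h: "h \<in> span (set (others xs j))"
    and r: "\<And>w. w \<in> span (set (others xs j)) \<Longrightarrow> r \<bullet> w = 0" and q: "q = h + r"
    using orthogonal_subspace_decomp_exists[of "set (others xs j)" q]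
    unfolding Linear_Algebra.orthogonal_def by blast
  have "det (gram_mat (xs[j := q])) = det (gram_mat (xs[j := r + h]))" using q by (simp add: add.commute)
  also have "\<dots> = det (gram_mat (xs[j := r]))" by (rule gram_span_shift[OF j h])
  also have "\<dots> = (r \<bullet> r) * det (gram_mat (others xs j))"
    by (rule gram_orth[OF j]) (use r span_base in force)
  also have "r \<bullet> r = (infdist q (span (set (others xs j))))^2"
    using infdist_orth[OF h r q] by (simp add: power2_norm_eq_inner)
  finally show ?thesis .
qed

lemma gram_snoc:
  fixes ys :: "'a::euclidean_space list"
  shows "det (gram_mat (ys @ [q])) = (infdist q (span (set ys)))^2 * det (gram_mat ys)"
proof -
  have j: "length ys < length (ys @ [q])" by simp
  have o: "others (ys @ [q]) (length ys) = ys" unfolding others_def by simp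
  show ?thesis using gram_formula[OF j, of q] o by simp
qed

lemma gram_nil: "det (gram_mat []) = 1"
  unfolding gram_mat_def by (simp add: det_def)

lemma gram_nonneg:
  fixes xs :: "'a::euclidean_space list"
  shows "det (gram_mat xs) \<ge> 0"
proof (induction xs rule: rev_induct)
  case Nil
  then show ?case by (simp add: gram_nil)
next
  case (snoc x xs)
  then show ?case by (simp add: gram_snoc)
qed

lemma gram_indep:
  fixes xs :: "'a::euclidean_space list"
  shows "det (gram_mat xs) \<noteq> 0 \<Longrightarrow> distinct xs \<and> independent (set xs)"
proof (induction xs rule: rev_induct)
  case Nil
  then show ?case by (simp add: independent_empty)
next
  case (snoc x xs)
  have d: "infdist x (span (set xs)) \<noteq> 0" "det (gram_mat xs) \<noteq> 0"
    using snoc.prems by (auto simp: gram_snoc)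
  then have IH: "distinct xs" "independent (set xs)" using snoc.IH by auto
  have x: "x \<notin> span (set xs)" using d(1) by auto
  then have "x \<notin> set xs" using span_base by blast
  then show ?case using IH x by (simp add: independent_insert)
qed

lemma main_induct:
  fixes U V :: "'a::euclidean_space set" and \<alpha> :: real
  assumes a1: "\<alpha> \<ge> 1"
    and rep: "\<And>ys j. set ys \<subseteq> U \<Longrightarrow> length ys = k \<Longrightarrow> j < k \<Longrightarrow> ys ! j \<notin> V \<Longrightarrow>
        det (gram_mat ys) > 0 \<Longrightarrow> \<exists>q\<in>V \<inter> U. infdist q (span (set (others ys j))) * \<alpha>
           \<ge> infdist (ys ! j) (span (set (others ys j)))"
  shows "set ys \<subseteq> U \<Longrightarrow> length ys = k \<Longrightarrow> card {j. j < k \<and> ys ! j \<notin> V} \<le> n \<Longrightarrow>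
     det (gram_mat ys) > 0 \<Longrightarrow>
     \<exists>zs. distinct zs \<and> length zs = k \<and> set zs \<subseteq> V \<and> det (gram_mat zs) \<ge> det (gram_mat ys) / \<alpha> ^ (2 * n)"
proof (induction n arbitrary: ys)
  case 0
  have "{j. j < k \<and> ys ! j \<notin> V} = {}" using 0 by simp
  then have "set ys \<subseteq> V" using 0 by (auto simp: in_set_conv_nth)
  moreover have "distinct ys" using gram_indep 0 by force
  ultimately show ?case using 0 by auto
next
  case (Suc n)
  let ?B = "{j. j < k \<and> ys ! j \<notin> V}"
  have dpos: "det (gram_mat ys) > 0" by fact
  have apos: "\<alpha> > 0" using a1 by simp
  show ?case
  proof (cases "?B = {}")
    case True
    then have "set ys \<subseteq> V" using Suc by (auto simp: in_set_conv_nth)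
    moreover have "distinct ys" using gram_indep Suc by force
    moreover have "det (gram_mat ys) / \<alpha> ^ (2 * Suc n) \<le> det (gram_mat ys)"
    proof -
      have "1 \<le> \<alpha> ^ (2 * Suc n)" using a1 by (rule one_le_power)
      then show ?thesis using dpos by (simp add: divide_le_eq)
    qed
    ultimately show ?thesis using Suc by auto
  next
    case False
    then obtain j where j: "j < k" "ys ! j \<notin> V" by auto
    let ?H = "span (set (others ys j))"
    obtain q where q: "q \<in> V" "q \<in> U" and qd: "infdist q ?H * \<alpha> \<ge> infdist (ys ! j) ?H"
      using rep[OF Suc.prems(1,2) j dpos] by blast
    define zs where "zs = ys[j := q]"
    have jl: "j < length ys" using j Suc.prems by simp
    define C where "C = det (gram_mat (others ys j))"
    have e1: "det (gram_mat ys) = (infdist (ys ! j) ?H)^2 * C"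
      using gram_formula[OF jl, of "ys ! j"] unfolding C_def by simp
    have e2: "det (gram_mat zs) = (infdist q ?H)^2 * C"
      using gram_formula[OF jl, of q] unfolding C_def zs_def by simp
    have Cpos: "C > 0" using e1 dpos
      by (metis not_le mult_nonneg_nonpos zero_le_power2 gram_nonneg C_def order.strict_iff_order)
    have "infdist (ys ! j) ?H / \<alpha> \<le> infdist q ?H" using qd apos by (simp add: divide_le_eq)
    then have "(infdist (ys ! j) ?H / \<alpha>)^2 \<le> (infdist q ?H)^2"
      by (intro power_mono) (use apos infdist_nonneg[of "ys ! j" ?H] in simp_all)
    then have "(infdist (ys ! j) ?H)^2 / \<alpha>^2 * C \<le> (infdist q ?H)^2 * C"
      using Cpos by (intro mult_right_mono) (simp_all add: power_divide)
    then have st: "det (gram_mat ys) / \<alpha>^2 \<le> det (gram_mat zs)" using e1 e2 by (simp add: field_simps)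
    have zpos: "det (gram_mat zs) > 0"
    proof -
      have "0 < det (gram_mat ys) / \<alpha>^2" using dpos apos by simp
      then show ?thesis using st by linarith
    qed
    have zU: "set zs \<subseteq> U" unfolding zs_def using Suc.prems(1) q
      by (meson insert_subset order_trans set_update_subset_insert)
    have zl: "length zs = k" unfolding zs_def using Suc.prems by simp
    have sub: "{i. i < k \<and> zs ! i \<notin> V} \<subseteq> ?B - {j}"
      unfolding zs_def using q jl Suc.prems by (auto simp: nth_list_update)
    have "card {i. i < k \<and> zs ! i \<notin> V} \<le> card (?B - {j})"
      by (rule card_mono[OF _ sub]) auto
    also have "\<dots> = card ?B - 1" using j by simp
    finally have cz: "card {i. i < k \<and> zs ! i \<notin> V} \<le> n" using Suc.prems(3) by simp
    obtain ws where ws: "distinct ws" "length ws = k" "set ws \<subseteq> V"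
      "det (gram_mat ws) \<ge> det (gram_mat zs) / \<alpha> ^ (2 * n)"
      using Suc.IH[OF zU zl cz zpos] by blast
    have "det (gram_mat ys) / \<alpha> ^ (2 * Suc n) = (det (gram_mat ys) / \<alpha>^2) / \<alpha> ^ (2 * n)"
      by (simp add: power_add field_simps power2_eq_square)
    also have "\<dots> \<le> det (gram_mat zs) / \<alpha> ^ (2 * n)"
      using st apos by (intro divide_right_mono) simp_all
    finally show ?thesis using ws by auto
  qed
qed

lemma maxdet_nonneg:
  fixes V :: "'a::euclidean_space set"
  assumes "finite V"
  shows "maxdet k V \<ge> 0"
proof -
  let ?D = "{det (gram_mat xs) | xs. distinct xs \<and> set xs \<subseteq> V \<and> length xs = k}"
  have fin: "finite ?D"
  proof -
    have "?D \<subseteq> (\<lambda>xs. det (gram_mat xs)) ` {xs. set xs \<subseteq> V \<and> length xs = k}" by auto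
    then show ?thesis using finite_lists_length_eq[OF assms] by (meson finite_surj)
  qed
  show ?thesis
  proof (cases "?D = {}")
    case True then show ?thesis unfolding maxdet_def by simp
  next
    case False
    then obtain xs where xs: "distinct xs \<and> set xs \<subseteq> V \<and> length xs = k" by blast
    then have m: "det (gram_mat xs) \<in> ?D" by blast
    have "det (gram_mat xs) \<le> Max ?D" using Max_ge[OF fin m] .
    moreover have "maxdet k V = Max ?D" unfolding maxdet_def Let_def using False by (rule if_not_P)
    ultimately show ?thesis using gram_nonneg[of xs] by linarith
  qed
qed

lemma maxdet_ge:
  fixes V :: "'a::euclidean_space set"
  assumes "finite V" "distinct xs" "set xs \<subseteq> V" "length xs = k"
  shows "det (gram_mat xs) \<le> maxdet k V"
proof -
  let ?D = "{det (gram_mat xs) | xs. distinct xs \<and> set xs \<subseteq> V \<and> length xs = k}"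
  have fin: "finite ?D"
  proof -
    have "?D \<subseteq> (\<lambda>xs. det (gram_mat xs)) ` {xs. set xs \<subseteq> V \<and> length xs = k}" by auto
    then show ?thesis using finite_lists_length_eq[OF assms(1)] by (meson finite_surj)
  qed
  have m: "det (gram_mat xs) \<in> ?D" using assms by blast
  then have "?D \<noteq> {}" by blast
  moreover have "maxdet k V = Max ?D" unfolding maxdet_def Let_def using \<open>?D \<noteq> {}\<close> by (rule if_not_P)
  ultimately show ?thesis using Max_ge[OF fin m] by simp
qed

lemma maxdet_attained:
  fixes U :: "'a::euclidean_space set"
  assumes "finite U"
  shows "maxdet k U = 0 \<or> (\<exists>xs. distinct xs \<and> set xs \<subseteq> U \<and> length xs = k \<and> maxdet k U = det (gram_mat xs))"
proof -
  let ?D = "{det (gram_mat xs) | xs. distinct xs \<and> set xs \<subseteq> U \<and> length xs = k}"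
  have fin: "finite ?D"
  proof -
    have "?D \<subseteq> (\<lambda>xs. det (gram_mat xs)) ` {xs. set xs \<subseteq> U \<and> length xs = k}" by auto
    then show ?thesis using finite_lists_length_eq[OF assms(1)] by (meson finite_surj)
  qed
  show ?thesis
  proof (cases "?D = {}")
    case True then show ?thesis unfolding maxdet_def by simp
  next
    case False
    have "Max ?D \<in> ?D" using Max_in[OF fin False] .
    then show ?thesis using False unfolding maxdet_def by (auto simp: Let_def)
  qed
qed

theorem lemma3p3:
  fixes P c :: "nat \<Rightarrow> 'a::euclidean_space set"
    and k m :: nat and \<alpha> :: real
  assumes "1 \<le> k" and "k \<le> DIM('a)" and "\<alpha> \<ge> 1"
    and "\<And>i. i \<in> {1..m} \<Longrightarrow> finite (P i)"
    and "\<And>i. i \<in> {1..m} \<Longrightarrow> approx_coreset \<alpha> k (c i) (P i)"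
  shows "maxdet k (\<Union>i\<in>{1..m}. P i) \<le> \<alpha> ^ (2 * k) * maxdet k (\<Union>i\<in>{1..m}. c i)"
proof -
  define U where "U = (\<Union>i\<in>{1..m}. P i)"
  define V where "V = (\<Union>i\<in>{1..m}. c i)"
  have cP: "\<And>i. i \<in> {1..m} \<Longrightarrow> c i \<subseteq> P i" using assms(5) unfolding approx_coreset_def by blast
  have finU: "finite U" unfolding U_def using assms(4) by blast
  have VU: "V \<subseteq> U" unfolding U_def V_def using cP by blast
  have finV: "finite V" using finite_subset[OF VU finU] .
  have apos: "\<alpha> > 0" using assms(3) by simp
  have V0: "maxdet k V \<ge> 0" by (rule maxdet_nonneg[OF finV])
  have rep: "\<exists>q\<in>V \<inter> U. infdist q (span (set (others ys j))) * \<alpha>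
           \<ge> infdist (ys ! j) (span (set (others ys j)))"
    if ys: "set ys \<subseteq> U" "length ys = k" "j < k" "ys ! j \<notin> V" "det (gram_mat ys) > 0" for ys j
  proof -
    let ?H = "span (set (others ys j))"
    have jl: "j < length ys" using ys by simp
    have e1: "det (gram_mat ys) = (infdist (ys ! j) ?H)^2 * det (gram_mat (others ys j))"
      using gram_formula[OF jl, of "ys ! j"] by simp
    have Cnz: "det (gram_mat (others ys j)) \<noteq> 0" using e1 ys(5) by auto
    have dnz: "infdist (ys ! j) ?H \<noteq> 0" using e1 ys(5) by auto
    have ind: "distinct (others ys j)" "independent (set (others ys j))" using gram_indep[OF Cnz] by auto
    have "dim ?H = card (set (others ys j))" using dim_span_eq_card_independent[OF ind(2)] .
    also have "\<dots> = k - 1" using distinct_card[OF ind(1)] others_length[OF jl] ys(2) by simp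
    finally have Hdim: "?H \<in> subspaces_of_dim (k - 1)" unfolding subspaces_of_dim_def by simp
    have "ys ! j \<in> U" using ys jl by (meson nth_mem subsetD)
    then obtain i where i: "i \<in> {1..m}" "ys ! j \<in> P i" unfolding U_def by blast
    have hc: "height (c i) ?H \<ge> height (P i) ?H / \<alpha>"
      using assms(5)[OF i(1)] Hdim unfolding approx_coreset_def by blast
    have finP: "finite (P i)" using assms(4)[OF i(1)] .
    have "infdist (ys ! j) ?H \<le> height (P i) ?H"
      unfolding height_def using i(2) finP by auto
    then have le: "infdist (ys ! j) ?H \<le> height (c i) ?H * \<alpha>"
      using hc apos by (simp add: divide_le_eq)
    have "infdist (ys ! j) ?H > 0" using dnz infdist_nonneg[of "ys ! j" ?H] by linarith
    then have "height (c i) ?H \<noteq> 0" using le by auto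
    then have cne: "c i \<noteq> {}" unfolding height_def by auto
    have finc: "finite (c i)" using finite_subset[OF cP[OF i(1)] finP] .
    have "Max ((\<lambda>p. infdist p ?H) ` c i) \<in> (\<lambda>p. infdist p ?H) ` c i"
      using finc cne by (intro Max_in) auto
    then obtain q where q1: "q \<in> c i" "infdist q ?H = Max ((\<lambda>p. infdist p ?H) ` c i)"
      by (metis (no_types, lifting) imageE)
    then have q: "q \<in> c i" "infdist q ?H = height (c i) ?H"
      unfolding height_def using cne by auto
    have "q \<in> V" unfolding V_def using q(1) i(1) by blast
    then show ?thesis using VU q le by (intro bexI[of _ q]) auto
  qed
  show ?thesis
  proof (cases "maxdet k U = 0")
    case True
    then show ?thesis unfolding U_def[symmetric] V_def[symmetric] using V0 by simp
  next
    case False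
    then obtain xs where xs: "distinct xs" "set xs \<subseteq> U" "length xs = k" "maxdet k U = det (gram_mat xs)"
      using maxdet_attained[OF finU, of k] by blast
    show ?thesis
    proof (cases "det (gram_mat xs) > 0")
      case False
      have "0 \<le> \<alpha> ^ (2 * k) * maxdet k V" using V0 apos by simp
      then show ?thesis unfolding U_def[symmetric] V_def[symmetric] using False xs(4) by simp
    next
      case True
      have cardk: "card {j. j < k \<and> xs ! j \<notin> V} \<le> k"
        using card_mono[of "{..<k}" "{j. j < k \<and> xs ! j \<notin> V}"] by auto
      obtain zs where zs: "distinct zs" "length zs = k" "set zs \<subseteq> V"
        "det (gram_mat zs) \<ge> det (gram_mat xs) / \<alpha> ^ (2 * k)"
        using main_induct[OF assms(3) rep xs(2,3) cardk True] by blast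
      have "det (gram_mat zs) \<le> maxdet k V" by (rule maxdet_ge[OF finV zs(1,3,2)])
      then have "det (gram_mat xs) / \<alpha> ^ (2 * k) \<le> maxdet k V" using zs(4) by linarith
      then have "det (gram_mat xs) \<le> \<alpha> ^ (2 * k) * maxdet k V"
        using apos by (simp add: divide_le_eq mult.commute)
      then show ?thesis unfolding U_def[symmetric] V_def[symmetric] using xs(4) by simp
    qed
  qed
qed

end
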